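(* Let $D$ be a vertex-supported effective divisor on a metric graph $\Gamma$. If $f\in R(D)$ and $D+(f)$ is an anchor divisor, then $f$ has at most two linear pieces on each edge of $\Gamma$.
   Context: A metric graph $\Gamma=(V,E)$ is a connected undirected graph whose edges have positive real lengths. Divisors are finite formal $\mathbb{Z}$-combinations of points of $\Gamma$; effective means nonnegative coefficients; vertex-supported means support contained in $V$. A rational function is a continuous $f:\Gamma\to\mathbb{R}$, piecewise linear on each edge with finitely many pieces and integer slopes; $(f)=\sum_x\mathrm{ord}_x(f)x$, where $\mathrm{ord}_x(f)$ is the sum of the outgoing slopes of $f$ at $x$. $R(D)$ is the set of rational functions $f$ with $D+(f)$ effective. A divisor $L$ is an anchor divisor if for each edge of $\Gamma$ there is at most one interior point $x$ of that edge with $L(x)>0$. *)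

theory Defs
  imports Complex_Main
begin

text \<open>Metric graph: finite vertex set V, finite edge set E, each edge has two
  endpoints (ends e) and a positive length (len e). Loops and multiple edges allowed.\<close>

definition adjacent :: "'e set \<Rightarrow> ('e \<Rightarrow> 'v \<times> 'v) \<Rightarrow> 'v \<Rightarrow> 'v \<Rightarrow> bool" where
  "adjacent E ends u w \<longleftrightarrow> (\<exists>e\<in>E. ends e = (u, w) \<or> ends e = (w, u))"

definition metric_graph :: "'v set \<Rightarrow> 'e set \<Rightarrow> ('e \<Rightarrow> 'v \<times> 'v) \<Rightarrow> ('e \<Rightarrow> real) \<Rightarrow> bool" where
  "metric_graph V E ends len \<longleftrightarrow>
     finite V \<and> V \<noteq> {} \<and> finite E \<and>
     (\<forall>e\<in>E. fst (ends e) \<in> V \<and> snd (ends e) \<in> V \<and> len e > 0) \<and>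
     (\<forall>u\<in>V. \<forall>w\<in>V. (adjacent E ends)\<^sup>*\<^sup>* u w)"

text \<open>Points of the metric graph: vertices, and interior points of edges
  (Pt e t is the point at distance t from the first endpoint of e, 0 < t < len e).\<close>
datatype ('v, 'e) point = Vtx 'v | Pt 'e real

definition is_point :: "'v set \<Rightarrow> 'e set \<Rightarrow> ('e \<Rightarrow> real) \<Rightarrow> ('v, 'e) point \<Rightarrow> bool" where
  "is_point V E len x \<longleftrightarrow>
     (\<exists>v\<in>V. x = Vtx v) \<or> (\<exists>e\<in>E. \<exists>t. 0 < t \<and> t < len e \<and> x = Pt e t)"

definition divisor :: "'v set \<Rightarrow> 'e set \<Rightarrow> ('e \<Rightarrow> real) \<Rightarrow> (('v, 'e) point \<Rightarrow> int) \<Rightarrow> bool" where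
  "divisor V E len D \<longleftrightarrow> finite {x. D x \<noteq> 0} \<and> (\<forall>x. D x \<noteq> 0 \<longrightarrow> is_point V E len x)"

definition effective :: "(('v, 'e) point \<Rightarrow> int) \<Rightarrow> bool" where
  "effective D \<longleftrightarrow> (\<forall>x. D x \<ge> 0)"

definition vertex_supported :: "'v set \<Rightarrow> (('v, 'e) point \<Rightarrow> int) \<Rightarrow> bool" where
  "vertex_supported V D \<longleftrightarrow> (\<forall>x. D x \<noteq> 0 \<longrightarrow> (\<exists>v\<in>V. x = Vtx v))"

definition edge_fun :: "('e \<Rightarrow> 'v \<times> 'v) \<Rightarrow> ('e \<Rightarrow> real) \<Rightarrow> (('v, 'e) point \<Rightarrow> real) \<Rightarrow> 'e \<Rightarrow> real \<Rightarrow> real" where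
  "edge_fun ends len f e t =
     (if t = 0 then f (Vtx (fst (ends e)))
      else if t = len e then f (Vtx (snd (ends e)))
      else f (Pt e t))"

text \<open>Rational function: on each edge, continuous and piecewise linear with finitely many
  pieces and integer slopes (continuity follows from the pieces being closed intervals
  glued at vertices).\<close>
definition rational_function :: "'e set \<Rightarrow> ('e \<Rightarrow> 'v \<times> 'v) \<Rightarrow> ('e \<Rightarrow> real) \<Rightarrow> (('v, 'e) point \<Rightarrow> real) \<Rightarrow> bool" where
  "rational_function E ends len f \<longleftrightarrow>
     (\<forall>e\<in>E. \<exists>ts :: real list.
        length ts \<ge> 2 \<and> sorted_wrt (<) ts \<and> hd ts = 0 \<and> last ts = len e \<and>
        (\<forall>i < length ts - 1. \<exists>(a::real) (m::int).
            \<forall>t\<in>{ts ! i .. ts ! (i+1)}. edge_fun ends len f e t = a + of_int m * t))"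

definition rslope :: "(real \<Rightarrow> real) \<Rightarrow> real \<Rightarrow> real" where
  "rslope g t = (THE m. (g has_real_derivative m) (at_right t))"

definition lslope :: "(real \<Rightarrow> real) \<Rightarrow> real \<Rightarrow> real" where
  "lslope g t = (THE m. (g has_real_derivative m) (at_left t))"

text \<open>ord_x(f): sum of outgoing slopes of f at x.\<close>
fun ord :: "'e set \<Rightarrow> ('e \<Rightarrow> 'v \<times> 'v) \<Rightarrow> ('e \<Rightarrow> real) \<Rightarrow> (('v, 'e) point \<Rightarrow> real) \<Rightarrow> ('v, 'e) point \<Rightarrow> real" where
  "ord E ends len f (Pt e t) = rslope (edge_fun ends len f e) t - lslope (edge_fun ends len f e) t"
| "ord E ends len f (Vtx v) =
     (\<Sum>e\<in>{e\<in>E. fst (ends e) = v}. rslope (edge_fun ends len f e) 0)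
   + (\<Sum>e\<in>{e\<in>E. snd (ends e) = v}. - lslope (edge_fun ends len f e) (len e))"

definition RD :: "'v set \<Rightarrow> 'e set \<Rightarrow> ('e \<Rightarrow> 'v \<times> 'v) \<Rightarrow> ('e \<Rightarrow> real) \<Rightarrow> (('v, 'e) point \<Rightarrow> int) \<Rightarrow> (('v, 'e) point \<Rightarrow> real) set" where
  "RD V E ends len D = {f. rational_function E ends len f \<and>
     (\<forall>x. is_point V E len x \<longrightarrow> real_of_int (D x) + ord E ends len f x \<ge> 0)}"

text \<open>Anchor divisor (given as a real-valued function, as D + (f) is): on each edge at most
  one interior point with positive value.\<close>
definition anchor :: "'e set \<Rightarrow> ('e \<Rightarrow> real) \<Rightarrow> (('v, 'e) point \<Rightarrow> real) \<Rightarrow> bool" where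
  "anchor E len L \<longleftrightarrow>
     (\<forall>e\<in>E. \<forall>s t. 0 < s \<and> s < len e \<and> 0 < t \<and> t < len e \<and> L (Pt e s) > 0 \<and> L (Pt e t) > 0
        \<longrightarrow> s = t)"

definition at_most_two_pieces :: "('e \<Rightarrow> 'v \<times> 'v) \<Rightarrow> ('e \<Rightarrow> real) \<Rightarrow> (('v, 'e) point \<Rightarrow> real) \<Rightarrow> 'e \<Rightarrow> bool" where
  "at_most_two_pieces ends len f e \<longleftrightarrow>
     (\<exists>s\<in>{0..len e}. \<exists>(a1::real) (m1::int) (a2::real) (m2::int).
        (\<forall>t\<in>{0..s}. edge_fun ends len f e t = a1 + of_int m1 * t) \<and>
        (\<forall>t\<in>{s..len e}. edge_fun ends len f e t = a2 + of_int m2 * t))"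

end

theory Submission
  imports Defs
begin

lemma deriv_unique_right:
  assumes "(g has_real_derivative m) (at_right t)" "(g has_real_derivative m') (at_right t)"
  shows "m = m'"
  using assms unfolding has_field_derivative_iff
  by (intro tendsto_unique[of "at_right t"]) auto

lemma deriv_unique_left:
  assumes "(g has_real_derivative m) (at_left t)" "(g has_real_derivative m') (at_left t)"
  shows "m = m'"
  using assms unfolding has_field_derivative_iff
  by (intro tendsto_unique[of "at_left t"]) auto

lemma rslope_lin:
  fixes g :: "real \<Rightarrow> real"
  assumes "t < u" "\<forall>x\<in>{t..u}. g x = a + m * x"
  shows "rslope g t = m"
proof -
  have ev: "eventually (\<lambda>x. (\<lambda>x. a + m * x) x = g x) (at_right t)"
    unfolding eventually_at_right[OF assms(1)] using assms by (intro exI[of _ u]) auto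
  have "((\<lambda>x. a + m * x) has_real_derivative m) (at_right t)"
    by (auto intro!: derivative_eq_intros)
  hence d: "(g has_real_derivative m) (at_right t)"
    using has_field_derivative_cong_eventually[OF ev] assms by auto
  show ?thesis unfolding rslope_def
    using d deriv_unique_right by (intro the_equality) auto
qed

lemma lslope_lin:
  fixes g :: "real \<Rightarrow> real"
  assumes "u < t" "\<forall>x\<in>{u..t}. g x = a + m * x"
  shows "lslope g t = m"
proof -
  have ev: "eventually (\<lambda>x. (\<lambda>x. a + m * x) x = g x) (at_left t)"
    unfolding eventually_at_left[OF assms(1)] using assms by (intro exI[of _ u]) auto
  have "((\<lambda>x. a + m * x) has_real_derivative m) (at_left t)"
    by (auto intro!: derivative_eq_intros)
  hence d: "(g has_real_derivative m) (at_left t)"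
    using has_field_derivative_cong_eventually[OF ev] assms by auto
  show ?thesis unfolding lslope_def
    using d deriv_unique_left by (intro the_equality) auto
qed

lemma seg_exists:
  fixes ts :: "real list"
  assumes "sorted_wrt (<) ts" "p < q" "q < length ts" "ts!p \<le> x" "x \<le> ts!q"
  shows "\<exists>i. p \<le> i \<and> i < q \<and> ts!i \<le> x \<and> x \<le> ts!(Suc i)"
  using assms
proof (induction q)
  case 0 then show ?case by simp
next
  case (Suc q)
  show ?case
  proof (cases "x \<le> ts!q \<and> p < q")
    case True
    then obtain i where "p \<le> i \<and> i < q \<and> ts!i \<le> x \<and> x \<le> ts!(Suc i)"
      using Suc.IH Suc.prems by auto
    then show ?thesis by (intro exI[of _ i]) auto
  next
    case False
    then have "ts!q \<le> x" "p \<le> q" using Suc.prems by (auto simp: less_Suc_eq)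
    then show ?thesis using Suc.prems by (intro exI[of _ q]) (auto simp: less_Suc_eq)
  qed
qed

theorem lemma2p15:
  fixes V :: "'v set" and E :: "'e set" and ends :: "'e \<Rightarrow> 'v \<times> 'v" and len :: "'e \<Rightarrow> real"
    and D :: "('v, 'e) point \<Rightarrow> int" and f :: "('v, 'e) point \<Rightarrow> real"
  assumes "metric_graph V E ends len"
    and "divisor V E len D" and "effective D" and "vertex_supported V D"
    and "f \<in> RD V E ends len D"
    and "anchor E len (\<lambda>x. real_of_int (D x) + ord E ends len f x)"
  shows "\<forall>e\<in>E. at_most_two_pieces ends len f e"
proof
  fix e assume eE: "e \<in> E"
  define g where "g = edge_fun ends len f e"
  from assms(5) have rf: "rational_function E ends len f"
    and nonneg: "\<And>x. is_point V E len x \<Longrightarrow> real_of_int (D x) + ord E ends len f x \<ge> 0"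
    unfolding RD_def by auto
  from rf eE obtain ts :: "real list" where ts: "length ts \<ge> 2" "sorted_wrt (<) ts" "hd ts = 0"
     "last ts = len e"
     and pcs: "\<forall>i < length ts - 1. \<exists>(a::real) (m::int).
            \<forall>t\<in>{ts ! i .. ts ! (i+1)}. g t = a + of_int m * t"
    unfolding rational_function_def g_def by blast
  define n where "n = length ts"
  have "\<forall>i. \<exists>p::real \<times> int. i < n - 1 \<longrightarrow> (\<forall>t\<in>{ts ! i .. ts ! (i+1)}. g t = fst p + of_int (snd p) * t)"
    using pcs unfolding n_def by fastforce
  then obtain P where P: "\<And>i t. i < n - 1 \<Longrightarrow> t\<in>{ts ! i .. ts ! (i+1)} \<Longrightarrow> g t = fst (P i) + of_int (snd (P i)) * t"
    by metis
  define A where "A i = fst (P i)" for i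
  define M where "M i = snd (P i)" for i
  have AM: "\<And>i t. i < n - 1 \<Longrightarrow> t\<in>{ts ! i .. ts ! (i+1)} \<Longrightarrow> g t = A i + of_int (M i) * t"
    using P unfolding A_def M_def by auto
  have lt: "\<And>i j. i < j \<Longrightarrow> j < n \<Longrightarrow> ts!i < ts!j"
    using ts(2) sorted_wrt_nth_less n_def by blast
  have t0: "ts!0 = 0" using ts(3,1) hd_conv_nth[of ts] by force
  have tL: "ts!(n-1) = len e" using ts(4,1) last_conv_nth[of ts] n_def by force
  have n2: "n \<ge> 2" using ts(1) n_def by auto
  have Lpos: "0 < len e" using lt[of 0 "n-1"] n2 t0 tL by auto
  have interior: "0 < ts!i \<and> ts!i < len e" if "0 < i" "i < n - 1" for i
    using lt[of 0 i] lt[of i "n-1"] that t0 tL by auto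
  have Dz: "D (Pt e t) = 0" for t
    using assms(4) unfolding vertex_supported_def by auto
  have slopes: "rslope g (ts!i) = M i \<and> lslope g (ts!i) = M (i-1)" if "0 < i" "i < n - 1" for i
  proof
    show "rslope g (ts!i) = M i"
      by (rule rslope_lin[of _ "ts!(i+1)" _ "A i"]) (use lt[of i "i+1"] that AM[of i] in auto)
    have "i - 1 < n - 1" "Suc (i - 1) = i" using that by auto
    then show "lslope g (ts!i) = M (i-1)"
      using lslope_lin[of "ts!(i-1)" "ts!i" g "A (i-1)" "of_int (M (i-1))"]
        lt[of "i-1" i] that AM[of "i-1"] by auto
  qed
  have cont: "A (i-1) + of_int (M (i-1)) * ts!i = A i + of_int (M i) * ts!i" if "0 < i" "i < n - 1" for i
  proof -
    have "i - 1 < n - 1" "Suc (i - 1) = i" using that by auto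
    then have "g (ts!i) = A (i-1) + of_int (M (i-1)) * ts!i" using AM[of "i-1" "ts!i"] lt[of "i-1" i] that by (simp add: less_imp_le)
    moreover have "g (ts!i) = A i + of_int (M i) * ts!i" using AM[of i "ts!i"] lt[of i "i+1"] that by (simp add: less_imp_le)
    ultimately show ?thesis by simp
  qed
  have ordv: "real_of_int (D (Pt e (ts!i))) + ord E ends len f (Pt e (ts!i)) = of_int (M i) - of_int (M (i-1))"
    if "0 < i" "i < n - 1" for i
    using slopes[OF that] Dz unfolding g_def by simp
  have ispt: "is_point V E len (Pt e (ts!i))" if "0 < i" "i < n - 1" for i
    using interior[OF that] eE unfolding is_point_def by blast
  define kink where "kink i \<longleftrightarrow> 0 < i \<and> i < n - 1 \<and> M i \<noteq> M (i-1)" for i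
  have kpos: "real_of_int (D (Pt e (ts!i))) + ord E ends len f (Pt e (ts!i)) > 0" if "kink i" for i
  proof -
    have "0 < i" "i < n - 1" "M i \<noteq> M (i-1)" using that kink_def by auto
    with nonneg[OF ispt] ordv show ?thesis by (smt (verit) of_int_eq_iff)
  qed
  have kuniq: "i = j" if "kink i" "kink j" for i j
  proof -
    have hi: "0 < i" "i < n - 1" and hj: "0 < j" "j < n - 1" using that unfolding kink_def by auto
    have A6: "\<forall>s t. 0 < s \<and> s < len e \<and> 0 < t \<and> t < len e \<and>
        real_of_int (D (Pt e s)) + ord E ends len f (Pt e s) > 0 \<and>
        real_of_int (D (Pt e t)) + ord E ends len f (Pt e t) > 0 \<longrightarrow> s = t"
      using assms(6) eE unfolding anchor_def by blast
    have "ts!i = ts!j"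
      using A6[rule_format, OF conjI[OF _ conjI[OF _ conjI[OF _ conjI[OF _ conjI[OF kpos[OF that(1)] kpos[OF that(2)]]]]]]]
        interior[OF hi] interior[OF hj] by blast
    moreover have "i < n" "j < n" using hi hj by auto
    ultimately show ?thesis using lt[of i j] lt[of j i]
      by (metis linorder_neqE_nat less_irrefl)
  qed
  define k where "k = (if \<exists>i. kink i then (SOME i. kink i) else 0)"
  have kn: "k < n - 1" using n2 someI_ex[of kink] unfolding k_def kink_def by auto
  have nonk: "M j = M (j-1) \<and> A j = A (j-1)" if "0 < j" "j < n - 1" "j \<noteq> k" for j
  proof -
    have "\<not> kink j"
    proof
      assume "kink j"
      then have "kink k" unfolding k_def using someI_ex[of kink] by auto
      with \<open>kink j\<close> kuniq that show False by auto
    qed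
    then have "M j = M (j-1)" using that kink_def by auto
    then show ?thesis using cont[OF that(1,2)] by simp
  qed
  have c1: "i < k \<longrightarrow> A i = A 0 \<and> M i = M 0" for i
  proof (induction i)
    case 0 then show ?case by simp
  next
    case (Suc i)
    show ?case using nonk[of "Suc i"] Suc kn by auto
  qed
  have c2: "k + d < n - 1 \<longrightarrow> A (k+d) = A k \<and> M (k+d) = M k" for d
  proof (induction d)
    case 0 then show ?case by simp
  next
    case (Suc d)
    show ?case using nonk[of "k + Suc d"] Suc by auto
  qed
  show "at_most_two_pieces ends len f e"
    unfolding at_most_two_pieces_def
  proof (intro bexI exI conjI ballI)
    show "ts!k \<in> {0..len e}"
      using interior[of k] t0 kn tL Lpos by (cases "k = 0") auto
  next
    fix t assume t: "t \<in> {0..ts!k}"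
    show "edge_fun ends len f e t = A 0 + of_int (M 0) * t"
    proof (cases "k = 0")
      case True
      then have "t = 0" using t t0 by auto
      then show ?thesis using AM[of 0 0] n2 t0 lt[of 0 1] unfolding g_def by auto
    next
      case False
      then obtain i where i: "0 \<le> i" "i < k" "ts!i \<le> t" "t \<le> ts!(Suc i)"
      proof -
        have "k < length ts" using kn unfolding n_def by linarith
        then show ?thesis using that seg_exists[OF ts(2), of 0 k t] t t0 False by auto
      qed
      then show ?thesis using AM[of i t] c1[of i] kn unfolding g_def by auto
    qed
  next
    fix t assume t: "t \<in> {ts!k..len e}"
    obtain i where i: "k \<le> i" "i < n - 1" "ts!i \<le> t" "t \<le> ts!(Suc i)"
    proof -
      have "n - 1 < length ts" using n2 unfolding n_def by linarith
      then show ?thesis using that seg_exists[OF ts(2), of k "n-1" t] t tL kn unfolding n_def by auto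
    qed
    then show "edge_fun ends len f e t = A k + of_int (M k) * t"
      using AM[of i t] c2[of "i - k"] unfolding g_def by auto
  qed
qed

end
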